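(* Let $T$ be a tree with $m$ edges satisfying $\sum_{e_{uv}\in E(T)}(d_u+d_v)=4m$, let $s$ be a positive integer, and let $T_s$ be its $s$-th subdivision tree. Let $T'_s$ be any single-edge division tree of $T_s$. Then $T'_s$ is neutral, and any single-edge division tree $(T'_s)'$ of $T'_s$ is neutral as well.
   Context: All graphs are finite, simple and connected; $d_u$ denotes degree and sums over edges count each edge once. The $s$-th subdivision graph $G_s$ of $G$ is obtained by inserting $s$ new vertices into each edge of $G$. A single-edge division graph $G'$ of $G$ is obtained by inserting one new vertex into one arbitrarily chosen edge of $G$. For a graph $G=(V,E)$ with $m=|E|\geq1$, the assortativity coefficient is $$r(G)=\frac{m^{-1}\sum_{e_{uv}\in E} d_{u}d_{v}-\Big[m^{-1}\sum_{e_{uv}\in E} \tfrac{1}{2}(d_{u}+d_{v})\Big]^{2}}{m^{-1}\sum_{e_{uv}\in E} \tfrac{1}{2}(d^{2}_{u}+d^{2}_{v})-\Big[m^{-1}\sum_{e_{uv}\in E} \tfrac{1}{2}(d_{u}+d_{v})\Big]^{2}},$$ defined whenever the denominator is nonzero; $G$ is neutral if $r(G)$ is defined and equals $0$. *)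

theory Defs
  imports Complex_Main
begin

type_synonym 'a graph = "'a set \<times> 'a set set"

definition verts :: "'a graph \<Rightarrow> 'a set" where "verts G = fst G"
definition edges :: "'a graph \<Rightarrow> 'a set set" where "edges G = snd G"

definition simple_graph :: "'a graph \<Rightarrow> bool" where
  "simple_graph G \<longleftrightarrow> finite (verts G) \<and>
     (\<forall>e\<in>edges G. \<exists>u v. u \<noteq> v \<and> e = {u, v} \<and> u \<in> verts G \<and> v \<in> verts G)"

definition adj :: "'a graph \<Rightarrow> 'a \<Rightarrow> 'a \<Rightarrow> bool" where
  "adj G u v \<longleftrightarrow> {u, v} \<in> edges G"

definition connected_graph :: "'a graph \<Rightarrow> bool" where
  "connected_graph G \<longleftrightarrow> simple_graph G \<and> verts G \<noteq> {} \<and>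
     (\<forall>u\<in>verts G. \<forall>v\<in>verts G. (adj G)\<^sup>*\<^sup>* u v)"

definition is_tree :: "'a graph \<Rightarrow> bool" where
  "is_tree G \<longleftrightarrow> connected_graph G \<and> card (edges G) + 1 = card (verts G)"

definition deg :: "'a graph \<Rightarrow> 'a \<Rightarrow> nat" where
  "deg G u = card {e \<in> edges G. u \<in> e}"

definition path_edges :: "'a list \<Rightarrow> 'a set set" where
  "path_edges xs = set (map (\<lambda>(x, y). {x, y}) (zip xs (tl xs)))"

text \<open>H is the s-th subdivision of G: every edge e of G is replaced by a path P e
  with s new internal vertices (new vertices distinct and not in G).\<close>
definition subdivision :: "nat \<Rightarrow> 'a graph \<Rightarrow> 'a graph \<Rightarrow> bool" where
  "subdivision s G H \<longleftrightarrow> (\<exists>P :: 'a set \<Rightarrow> 'a list.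
     (\<forall>e\<in>edges G. length (P e) = s + 2 \<and> distinct (P e) \<and> {hd (P e), last (P e)} = e \<and>
        set (butlast (tl (P e))) \<inter> verts G = {}) \<and>
     (\<forall>e\<in>edges G. \<forall>e'\<in>edges G. e \<noteq> e' \<longrightarrow>
        set (butlast (tl (P e))) \<inter> set (butlast (tl (P e'))) = {}) \<and>
     verts H = verts G \<union> (\<Union>e\<in>edges G. set (P e)) \<and>
     edges H = (\<Union>e\<in>edges G. path_edges (P e)))"

definition single_edge_division :: "'a graph \<Rightarrow> 'a graph \<Rightarrow> bool" where
  "single_edge_division G H \<longleftrightarrow> (\<exists>u v w. u \<noteq> v \<and> {u, v} \<in> edges G \<and> w \<notin> verts G \<and>
     verts H = insert w (verts G) \<and>
     edges H = insert {u, w} (insert {w, v} (edges G - {{u, v}})))"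

text \<open>Assortativity coefficient; for an edge e = {u,v}:
  d_u d_v = prod over e, d_u + d_v = sum over e, d_u^2 + d_v^2 = sum of squares over e.\<close>
definition assort_mean :: "'a graph \<Rightarrow> real" where
  "assort_mean G = (1 / real (card (edges G))) *
     (\<Sum>e\<in>edges G. (1/2) * (\<Sum>x\<in>e. real (deg G x)))"

definition assort_num :: "'a graph \<Rightarrow> real" where
  "assort_num G = (1 / real (card (edges G))) * (\<Sum>e\<in>edges G. \<Prod>x\<in>e. real (deg G x))
     - (assort_mean G)\<^sup>2"

definition assort_den :: "'a graph \<Rightarrow> real" where
  "assort_den G = (1 / real (card (edges G))) *
     (\<Sum>e\<in>edges G. (1/2) * (\<Sum>x\<in>e. (real (deg G x))\<^sup>2)) - (assort_mean G)\<^sup>2"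

definition assortativity :: "'a graph \<Rightarrow> real" where
  "assortativity G = assort_num G / assort_den G"

definition neutral :: "'a graph \<Rightarrow> bool" where
  "neutral G \<longleftrightarrow> card (edges G) \<ge> 1 \<and> assort_den G \<noteq> 0 \<and> assortativity G = 0"

end

theory Submission
  imports Defs
begin


lemma simple_edge: "simple_graph G \<Longrightarrow> f \<in> edges G \<Longrightarrow> \<exists>u v. u \<noteq> v \<and> f = {u,v} \<and> u \<in> verts G \<and> v \<in> verts G"
  unfolding simple_graph_def by blast

lemma simple_finE: "simple_graph G \<Longrightarrow> finite (edges G)"
proof -
  assume a: "simple_graph G"
  have "edges G \<subseteq> Pow (verts G)" using simple_edge[OF a] by blast
  moreover have "finite (verts G)" using a simple_graph_def by blast
  ultimately show ?thesis by (meson finite_Pow_iff finite_subset)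
qed

lemma handshake:
  assumes "simple_graph G"
  shows "(\<Sum>e\<in>edges G. \<Sum>x\<in>e. g x) = (\<Sum>v\<in>verts G. (g v :: real) * real (deg G v))"
proof -
  have fE: "finite (edges G)" by (rule simple_finE[OF assms])
  have fV: "finite (verts G)" using assms simple_graph_def by blast
  have sub: "\<And>e. e \<in> edges G \<Longrightarrow> e \<subseteq> verts G" using simple_edge[OF assms] by blast
  have "(\<Sum>e\<in>edges G. \<Sum>x\<in>e. g x) = (\<Sum>e\<in>edges G. \<Sum>v\<in>verts G. if v \<in> e then g v else 0)"
  proof (rule sum.cong[OF refl])
    fix e assume "e \<in> edges G"
    then have "e \<subseteq> verts G" by (rule sub)
    then show "(\<Sum>x\<in>e. g x) = (\<Sum>v\<in>verts G. if v \<in> e then g v else 0)"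
      using fV by (simp add: sum.If_cases Int_absorb1 inf.absorb2)
  qed
  also have "\<dots> = (\<Sum>v\<in>verts G. \<Sum>e\<in>edges G. if v \<in> e then g v else 0)"
    by (rule sum.swap)
  also have "\<dots> = (\<Sum>v\<in>verts G. g v * real (deg G v))"
  proof (rule sum.cong[OF refl])
    fix v
    have "(\<Sum>e\<in>edges G. if v \<in> e then g v else 0) = (\<Sum>e\<in>{e \<in> edges G. v \<in> e}. g v)"
      by (rule sum.inter_filter[OF fE, symmetric])
    also have "\<dots> = g v * real (deg G v)" by (simp add: deg_def)
    finally show "(\<Sum>e\<in>edges G. if v \<in> e then g v else 0) = g v * real (deg G v)" .
  qed
  finally show ?thesis .
qed

definition goodG :: "'a graph \<Rightarrow> bool" where
  "goodG G \<longleftrightarrow> simple_graph G \<and> (\<forall>f\<in>edges G. \<exists>x\<in>f. deg G x = 2) \<and>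
     (\<Sum>e\<in>edges G. \<Sum>x\<in>e. real (deg G x)) = 4 * real (card (edges G)) \<and>
     (\<exists>f\<in>edges G. \<exists>x\<in>f. deg G x \<noteq> 2)"

lemma edge_local:
  fixes d :: "'a \<Rightarrow> real"
  assumes "u \<noteq> v" "f = {u,v}" "d u = 2 \<or> d v = 2"
  shows "(\<Prod>x\<in>f. d x) = 2 * ((\<Sum>x\<in>f. d x) - 2)"
    and "(\<Sum>x\<in>f. (d x)\<^sup>2) = 4 + ((\<Sum>x\<in>f. d x) - 2)\<^sup>2"
  using assms by (auto simp: power2_eq_square)

lemma good_neutral:
  assumes g: "goodG G"
  shows "neutral G"
proof -
  define E where "E = edges G"
  define m where "m = real (card E)"
  define d where "d = (\<lambda>x. real (deg G x))"
  define S where "S = (\<lambda>f. \<Sum>x\<in>f. d x)"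
  define D where "D = (\<lambda>f. S f - 2)"
  have simp: "simple_graph G" using g unfolding goodG_def by blast
  have fE: "finite E" unfolding E_def by (rule simple_finE[OF simp])
  obtain f0 x0 where f0: "f0 \<in> E" "x0 \<in> f0" "d x0 \<noteq> 2" using g unfolding goodG_def E_def d_def by auto
  have Ene: "E \<noteq> {}" using f0 by auto
  have mpos: "m > 0" unfolding m_def using fE Ene by (simp add: card_gt_0_iff)
  have loc: "(\<Prod>x\<in>f. d x) = 2 * D f \<and> (\<Sum>x\<in>f. (d x)\<^sup>2) = 4 + (D f)\<^sup>2" if fin: "f \<in> E" for f
  proof -
    obtain u v where uv: "u \<noteq> v" "f = {u,v}" using simple_edge[OF simp] fin E_def by blast
    have "\<exists>x\<in>f. deg G x = 2" using g fin unfolding goodG_def E_def by blast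
    then have "d u = 2 \<or> d v = 2" using uv unfolding d_def by auto
    then show ?thesis using edge_local[OF uv, of d] unfolding D_def S_def by auto
  qed
  have sumS: "(\<Sum>f\<in>E. S f) = 4 * m" using g unfolding goodG_def E_def S_def d_def m_def by blast
  have sumD: "(\<Sum>f\<in>E. D f) = 2 * m" using sumS unfolding D_def by (simp add: sum_subtractf m_def)
  have mean: "assort_mean G = 2"
  proof -
    have "assort_mean G = (1/m) * ((1/2) * (\<Sum>f\<in>E. S f))"
      unfolding assort_mean_def E_def m_def S_def d_def by (simp add: sum_distrib_left)
    then show ?thesis using sumS mpos by simp
  qed
  have num: "assort_num G = 0"
  proof -
    have "(\<Sum>e\<in>E. \<Prod>x\<in>e. d x) = (\<Sum>e\<in>E. 2 * D e)" by (rule sum.cong[OF refl]) (simp add: loc)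
    also have "\<dots> = 4 * m" using sumD by (simp add: sum_distrib_left[symmetric])
    finally have "(\<Sum>e\<in>E. \<Prod>x\<in>e. d x) = 4 * m" .
    then show ?thesis unfolding assort_num_def mean using mpos
      by (simp add: E_def m_def d_def)
  qed
  have den: "assort_den G = (\<Sum>f\<in>E. (D f - 2)\<^sup>2) / (2 * m)"
  proof -
    have "(\<Sum>e\<in>E. (1/2) * (\<Sum>x\<in>e. (d x)\<^sup>2)) = (\<Sum>e\<in>E. (1/2) * (4 + (D e)\<^sup>2))"
      by (rule sum.cong[OF refl]) (simp add: loc)
    also have "\<dots> = (\<Sum>e\<in>E. 2 + (1/2) * (D e - 2)\<^sup>2 + 2 * D e - 2)"
      by (rule sum.cong) (auto simp: power2_eq_square algebra_simps)
    also have "\<dots> = 2 * m + (1/2) * (\<Sum>e\<in>E. (D e - 2)\<^sup>2) + 2 * (2 * m) - 2 * m"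
      using sumD by (simp add: sum.distrib sum_subtractf sum_distrib_left[symmetric] sum_divide_distrib[symmetric] m_def)
    finally have h: "(\<Sum>e\<in>E. (1/2) * (\<Sum>x\<in>e. (d x)\<^sup>2)) = 4 * m + (1/2) * (\<Sum>e\<in>E. (D e - 2)\<^sup>2)"
      by simp
    have "assort_den G = (1/m) * (\<Sum>e\<in>E. (1/2) * (\<Sum>x\<in>e. (d x)\<^sup>2)) - 2\<^sup>2"
      unfolding assort_den_def mean by (simp add: E_def m_def d_def)
    also have "\<dots> = (1/m) * (4 * m + (1/2) * (\<Sum>e\<in>E. (D e - 2)\<^sup>2)) - 4" using h by simp
    also have "\<dots> = (\<Sum>f\<in>E. (D f - 2)\<^sup>2) / (2 * m)" using mpos by (simp add: field_simps)
    finally show ?thesis .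
  qed
  have pos: "(\<Sum>f\<in>E. (D f - 2)\<^sup>2) > 0"
  proof -
    obtain u v where uv: "u \<noteq> v" "f0 = {u,v}" using simple_edge[OF simp] f0(1) E_def by blast
    have "\<exists>x\<in>f0. deg G x = 2" using g f0(1) unfolding goodG_def E_def by blast
    then have "D f0 \<noteq> 2" using uv f0(2,3) unfolding D_def S_def d_def by auto
    then have "(D f0 - 2)\<^sup>2 > 0" by simp
    moreover have "(D f0 - 2)\<^sup>2 \<le> (\<Sum>f\<in>E. (D f - 2)\<^sup>2)"
      using fE f0(1) by (intro member_le_sum) auto
    ultimately show ?thesis by linarith
  qed
  have "assort_den G > 0" using den pos mpos by simp
  then show ?thesis unfolding neutral_def assortativity_def using num mpos m_def E_def by auto
qed


lemma card_swap: "finite A \<Longrightarrow> b \<in> A \<Longrightarrow> a \<notin> A \<Longrightarrow> card (insert a (A - {b})) = card A"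
  by (metis Diff_iff card.insert card_Suc_Diff1 finite_Diff)

lemma good_sed:
  assumes g: "goodG G" and sd: "single_edge_division G H"
  shows "goodG H"
proof -
  obtain u v w where uv: "u \<noteq> v" "{u, v} \<in> edges G" "w \<notin> verts G"
    and VH: "verts H = insert w (verts G)"
    and EH: "edges H = insert {u, w} (insert {w, v} (edges G - {{u, v}}))"
    using sd unfolding single_edge_division_def by blast
  define E where "E = edges G"
  have simp: "simple_graph G" using g unfolding goodG_def by blast
  have fE: "finite E" unfolding E_def by (rule simple_finE[OF simp])
  have sub: "\<And>e. e \<in> E \<Longrightarrow> e \<subseteq> verts G" using simple_edge[OF simp] E_def by blast
  have uvV: "u \<in> verts G" "v \<in> verts G" using sub[of "{u,v}"] uv(2) E_def by auto
  have wn: "\<And>e. e \<in> E \<Longrightarrow> w \<notin> e" using sub uv(3) by blast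
  have uw: "u \<noteq> w" "v \<noteq> w" using uvV uv(3) by auto
  have EH': "edges H = insert {u, w} (insert {w, v} (E - {{u, v}}))" using EH E_def by simp
  have degw: "deg H w = 2"
  proof -
    have "{e \<in> edges H. w \<in> e} = {{u,w},{w,v}}" using EH' wn by auto
    moreover have "{u,w} \<noteq> {w,v}" using uv(1) uw by (auto simp: doubleton_eq_iff)
    ultimately show ?thesis unfolding deg_def by simp
  qed
  have degx: "deg H x = deg G x" if xV: "x \<in> verts G" for x
  proof -
    have xw: "x \<noteq> w" using xV uv(3) by auto
    have fin: "finite {e \<in> E. x \<in> e}" using fE by simp
    show ?thesis
    proof (cases "x = u \<or> x = v")
      case True
      have inA: "{u,v} \<in> {e \<in> E. x \<in> e}" using True uv(2) E_def by auto
      have nA: "{e \<in> E. x \<in> e} \<inter> {{u,w},{w,v}} = {}" using wn by auto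
      have "\<exists>a b. edges H = insert a (insert b (E - {{u,v}})) \<and> x \<in> a \<and> x \<notin> b \<and> w \<in> a"
      proof (cases "x = u")
        case True
        then have "x \<notin> {w,v}" using uv(1) xw by auto
        then show ?thesis using EH' True by blast
      next
        case False
        then have xv: "x = v" using \<open>x = u \<or> x = v\<close> by blast
        then have "x \<notin> {u,w}" using uv(1) xw by auto
        moreover have "edges H = insert {w,v} (insert {u,w} (E - {{u,v}}))" using EH' by (simp add: insert_commute)
        ultimately show ?thesis using xv by blast
      qed
      then obtain a b where ab: "edges H = insert a (insert b (E - {{u,v}}))" "x \<in> a" "x \<notin> b" "w \<in> a"
        by blast
      have "{e \<in> edges H. x \<in> e} = insert a ({e \<in> E. x \<in> e} - {{u,v}})"
        unfolding ab(1) using ab(2,3) by blast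
      moreover have "a \<notin> {e \<in> E. x \<in> e}" using wn ab(4) by blast
      ultimately have "card {e \<in> edges H. x \<in> e} = card {e \<in> E. x \<in> e}"
        using card_swap[OF fin inA] by simp
      then show ?thesis unfolding deg_def E_def by simp
    next
      case False
      then have "x \<notin> {u,w}" "x \<notin> {w,v}" "x \<notin> {u,v}" using xw by auto
      then have "{e \<in> edges H. x \<in> e} = {e \<in> E. x \<in> e}" unfolding EH' by blast
      then show ?thesis unfolding deg_def E_def by simp
    qed
  qed
  have simpH: "simple_graph H"
  proof -
    have "finite (verts H)" using VH simp unfolding simple_graph_def by simp
    moreover have "\<forall>e\<in>edges H. \<exists>a b. a \<noteq> b \<and> e = {a, b} \<and> a \<in> verts H \<and> b \<in> verts H"
    proof
      fix e assume e: "e \<in> edges H"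
      show "\<exists>a b. a \<noteq> b \<and> e = {a, b} \<and> a \<in> verts H \<and> b \<in> verts H"
      proof (cases "e \<in> E")
        case True
        then show ?thesis using simple_edge[OF simp, of e] VH E_def by blast
      next
        case False
        then have "e = {u,w} \<or> e = {w,v}" using e EH' by auto
        then show ?thesis
        proof
          assume "e = {u,w}"
          then show ?thesis using uw uvV VH by (intro exI[of _ u] exI[of _ w]) simp
        next
          assume "e = {w,v}"
          then show ?thesis using uw uvV VH by (intro exI[of _ w] exI[of _ v]) auto
        qed
      qed
    qed
    ultimately show ?thesis unfolding simple_graph_def by blast
  qed
  have Sx: "(\<Sum>x\<in>f. real (deg H x)) = (\<Sum>x\<in>f. real (deg G x))" if "f \<in> E" for f
  proof (rule sum.cong[OF refl])
    fix x assume "x \<in> f"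
    then have "x \<in> verts G" using sub[OF that] by blast
    then show "real (deg H x) = real (deg G x)" using degx by simp
  qed
  have two: "\<forall>f\<in>edges H. \<exists>x\<in>f. deg H x = 2"
  proof
    fix f assume f: "f \<in> edges H"
    show "\<exists>x\<in>f. deg H x = 2"
    proof (cases "f \<in> E - {{u,v}}")
      case True
      then obtain x where x: "x \<in> f" "deg G x = 2" using g unfolding goodG_def E_def by blast
      have "x \<in> verts G" using sub True x(1) by blast
      then have "deg H x = 2" using degx x(2) by simp
      then show ?thesis using x(1) by blast
    next
      case False
      then have "w \<in> f" using f EH' by auto
      then show ?thesis using degw by blast
    qed
  qed
  have cardE: "card (edges H) = card E + 1"
  proof -
    have "{u,w} \<noteq> {w,v}" using uv(1) uw by (auto simp: doubleton_eq_iff)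
    moreover have "{u,w} \<notin> E" "{w,v} \<notin> E" using wn by auto
    moreover have "card (E - {{u,v}}) + 1 = card E"
      using fE uv(2) E_def by (metis Suc_eq_plus1 card_Suc_Diff1)
    ultimately show ?thesis using EH' fE by simp
  qed
  have sumH: "(\<Sum>e\<in>edges H. \<Sum>x\<in>e. real (deg H x)) = 4 * real (card (edges H))"
  proof -
    have n1: "{u,w} \<notin> insert {w,v} (E - {{u,v}})" using uv(1) uw wn by (auto simp: doubleton_eq_iff)
    have n2: "{w,v} \<notin> E - {{u,v}}" using wn by auto
    have "(\<Sum>e\<in>edges H. \<Sum>x\<in>e. real (deg H x)) =
        (real (deg G u) + 2) + ((2 + real (deg G v)) + (\<Sum>e\<in>E - {{u,v}}. \<Sum>x\<in>e. real (deg H x)))"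
      unfolding EH' using fE n1 n2 uw degw degx uvV by simp
    also have "(\<Sum>e\<in>E - {{u,v}}. \<Sum>x\<in>e. real (deg H x)) = (\<Sum>e\<in>E - {{u,v}}. \<Sum>x\<in>e. real (deg G x))"
      by (rule sum.cong[OF refl]) (simp add: Sx)
    also have "\<dots> = (\<Sum>e\<in>E. \<Sum>x\<in>e. real (deg G x)) - (real (deg G u) + real (deg G v))"
      using fE uv E_def by (simp add: sum_diff1)
    also have "(\<Sum>e\<in>E. \<Sum>x\<in>e. real (deg G x)) = 4 * real (card E)"
      using g unfolding goodG_def E_def by blast
    finally show ?thesis using cardE by simp
  qed
  have ex: "\<exists>f\<in>edges H. \<exists>x\<in>f. deg H x \<noteq> 2"
  proof -
    obtain f0 x0 where f0: "f0 \<in> E" "x0 \<in> f0" "deg G x0 \<noteq> 2" using g unfolding goodG_def E_def by blast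
    have x0V: "x0 \<in> verts G" using sub f0 by blast
    show ?thesis
    proof (cases "f0 = {u,v}")
      case True
      then have "x0 = u \<or> x0 = v" using f0 by auto
      have d0: "deg H x0 \<noteq> 2" using degx[OF x0V] f0(3) by simp
      show ?thesis
      proof (cases "x0 = u")
        case True
        have "{u,w} \<in> edges H" using EH' by simp
        then show ?thesis using d0 True by blast
      next
        case False
        then have "x0 = v" using \<open>x0 = u \<or> x0 = v\<close> by blast
        have "{w,v} \<in> edges H" using EH' by simp
        then show ?thesis using d0 \<open>x0 = v\<close> by blast
      qed
    next
      case False
      then have "f0 \<in> edges H" using EH' f0(1) by simp
      moreover have d0: "deg H x0 \<noteq> 2" using degx[OF x0V] f0(3) by simp
      ultimately show ?thesis using f0(2) by blast
    qed
  qed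
  show ?thesis unfolding goodG_def using simpH two sumH ex by blast
qed



lemma pe_conv: "path_edges L = {{L!i, L!Suc i} | i. Suc i < length L}"
proof -
  have z: "set (zip L (tl L)) = {(L!i, L!Suc i) | i. Suc i < length L}"
  proof
    show "set (zip L (tl L)) \<subseteq> {(L!i, L!Suc i) | i. Suc i < length L}"
      by (auto simp: set_zip nth_tl)
    show "{(L!i, L!Suc i) | i. Suc i < length L} \<subseteq> set (zip L (tl L))"
    proof
      fix p assume "p \<in> {(L!i, L!Suc i) | i. Suc i < length L}"
      then obtain i where i: "p = (L!i, L!Suc i)" "Suc i < length L" by blast
      have "(L!i, tl L ! i) \<in> set (zip L (tl L))" using i(2) by (auto simp: set_zip)
      then show "p \<in> set (zip L (tl L))" using i by (simp add: nth_tl)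
    qed
  qed
  show ?thesis unfolding path_edges_def set_map z by blast
qed

lemma int_conv: "set (butlast (tl L)) = {L!j | j. 0 < j \<and> Suc j < length L}"
proof (cases L)
  case Nil then show ?thesis by simp
next
  case (Cons a t)
  show ?thesis
  proof
    show "set (butlast (tl L)) \<subseteq> {L!j | j. 0 < j \<and> Suc j < length L}"
    proof
      fix x assume "x \<in> set (butlast (tl L))"
      then obtain i where i: "i < length (butlast t)" "x = butlast t ! i" using Cons by (auto simp: in_set_conv_nth)
      then have "x = L ! Suc i" using Cons by (simp add: nth_butlast)
      moreover have "Suc (Suc i) < length L" using i Cons by simp
      ultimately show "x \<in> {L!j | j. 0 < j \<and> Suc j < length L}" by blast
    qed
    show "{L!j | j. 0 < j \<and> Suc j < length L} \<subseteq> set (butlast (tl L))"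
    proof
      fix x assume "x \<in> {L!j | j. 0 < j \<and> Suc j < length L}"
      then obtain j where j: "x = L!j" "0 < j" "Suc j < length L" by blast
      then obtain k where k: "j = Suc k" by (cases j) auto
      have "butlast t ! k = x" using j k Cons by (simp add: nth_butlast)
      moreover have "k < length (butlast t)" using j k Cons by simp
      ultimately show "x \<in> set (butlast (tl L))" using Cons by (metis list.sel(3) nth_mem)
    qed
  qed
qed

lemma pe_sub: "f \<in> path_edges L \<Longrightarrow> f \<subseteq> set L"
  unfolding pe_conv by auto

lemma set_L: assumes "length L \<ge> 2" shows "set L = {hd L, last L} \<union> set (butlast (tl L))"
proof (cases L)
  case Nil then show ?thesis using assms by simp
next
  case (Cons a t)
  have "t \<noteq> []" using Cons assms by auto
  then have "set t = insert (last t) (set (butlast t))" by (metis append_butlast_last_id set_append Un_insert_right sup_bot.right_neutral list.set(1) list.set(2) Un_commute insert_is_Un)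
  then show ?thesis using Cons \<open>t \<noteq> []\<close> by auto
qed

lemma deg_int:
  assumes d: "distinct L" and j: "0 < j" "Suc j < length L"
  shows "card {f\<in>path_edges L. L!j \<in> f} = 2"
proof -
  have eq: "{f\<in>path_edges L. L!j \<in> f} = {{L!(j-1), L!j}, {L!j, L!Suc j}}"
  proof
    show "{f\<in>path_edges L. L!j \<in> f} \<subseteq> {{L!(j-1), L!j}, {L!j, L!Suc j}}"
    proof
      fix f assume "f \<in> {f\<in>path_edges L. L!j \<in> f}"
      then obtain i where i: "f = {L!i, L!Suc i}" "Suc i < length L" "L!j \<in> f" unfolding pe_conv by blast
      then have "L!j = L!i \<or> L!j = L!Suc i" by auto
      then have "j = i \<or> j = Suc i" using d i(2) j by (auto simp: nth_eq_iff_index_eq)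
      then show "f \<in> {{L!(j-1), L!j}, {L!j, L!Suc j}}" using i(1) by auto
    qed
    show "{{L!(j-1), L!j}, {L!j, L!Suc j}} \<subseteq> {f\<in>path_edges L. L!j \<in> f}"
    proof -
      have "{L!(j-1), L!Suc (j-1)} \<in> path_edges L" unfolding pe_conv using j by auto
      moreover have "{L!j, L!Suc j} \<in> path_edges L" unfolding pe_conv using j by auto
      ultimately show ?thesis using j by auto
    qed
  qed
  have "L!(j-1) \<noteq> L!Suc j" using d j by (simp add: nth_eq_iff_index_eq)
  moreover have "L!(j-1) \<noteq> L!j" using d j by (simp add: nth_eq_iff_index_eq)
  ultimately have "{L!(j-1), L!j} \<noteq> {L!j, L!Suc j}" by (auto simp: doubleton_eq_iff)
  then show ?thesis unfolding eq by simp
qed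

lemma deg_end:
  assumes d: "distinct L" and l: "length L \<ge> 3" and x: "x \<in> {hd L, last L}"
  shows "card {f\<in>path_edges L. x \<in> f} = 1"
proof -
  have ne: "L \<noteq> []" using l by auto
  obtain k where k: "x = L!k" "k = 0 \<or> k = length L - 1"
    using x ne by (metis hd_conv_nth last_conv_nth insert_iff singletonD)
  define i where "i = (if k = 0 then 0 else length L - 2)"
  have eq: "{f\<in>path_edges L. x \<in> f} = {{L!i, L!Suc i}}"
  proof
    show "{f\<in>path_edges L. x \<in> f} \<subseteq> {{L!i, L!Suc i}}"
    proof
      fix f assume "f \<in> {f\<in>path_edges L. x \<in> f}"
      then obtain i' where i': "f = {L!i', L!Suc i'}" "Suc i' < length L" "x \<in> f" unfolding pe_conv by blast
      then have o: "L!k = L!i' \<or> L!k = L!Suc i'" using k by auto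
      have kl: "k < length L" using k(2) ne by auto
      have "k = i' \<or> k = Suc i'"
        using o nth_eq_iff_index_eq[OF d kl, of i'] nth_eq_iff_index_eq[OF d kl, of "Suc i'"] i'(2) by auto
      then have "i' = i" using k i'(2) l unfolding i_def by auto
      then show "f \<in> {{L!i, L!Suc i}}" using i' by auto
    qed
    show "{{L!i, L!Suc i}} \<subseteq> {f\<in>path_edges L. x \<in> f}"
    proof -
      have "{L!i, L!Suc i} \<in> path_edges L" unfolding pe_conv using l i_def by auto
      moreover have "x \<in> {L!i, L!Suc i}" using k l unfolding i_def
        by (cases "k = 0") (auto simp: Suc_diff_Suc numeral_2_eq_2)
      ultimately show ?thesis by auto
    qed
  qed
  show ?thesis unfolding eq by simp
qed

lemma meet_int:
  assumes l: "length L \<ge> 3" and f: "f \<in> path_edges L"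
  shows "\<exists>x\<in>f. x \<in> set (butlast (tl L))"
proof -
  obtain i where i: "f = {L!i, L!Suc i}" "Suc i < length L" using f unfolding pe_conv by blast
  show ?thesis
  proof (cases "i = 0")
    case True
    then have "L!Suc i \<in> set (butlast (tl L))" unfolding int_conv using l by auto
    then show ?thesis using i by auto
  next
    case False
    then have "L!i \<in> set (butlast (tl L))" unfolding int_conv using i by auto
    then show ?thesis using i by auto
  qed
qed

lemma card_int: "distinct L \<Longrightarrow> card (set (butlast (tl L))) = length L - 2"
  by (simp add: distinct_card distinct_butlast distinct_tl)



lemma sub_good:
  assumes tree: "is_tree T"
    and sumT: "(\<Sum>e\<in>edges T. \<Sum>x\<in>e. real (deg T x)) = 4 * real (card (edges T))"
    and s1: "s \<ge> 1"
    and sd: "subdivision s T Ts"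
    and ne: "edges Ts \<noteq> {}"
  shows "goodG Ts"
proof -
  have ex: "\<exists>P :: 'a set \<Rightarrow> 'a list.
     (\<forall>e\<in>edges T. length (P e) = s + 2 \<and> distinct (P e) \<and> {hd (P e), last (P e)} = e \<and>
        set (butlast (tl (P e))) \<inter> verts T = {}) \<and>
     (\<forall>e\<in>edges T. \<forall>e'\<in>edges T. e \<noteq> e' \<longrightarrow>
        set (butlast (tl (P e))) \<inter> set (butlast (tl (P e'))) = {}) \<and>
     verts Ts = verts T \<union> (\<Union>e\<in>edges T. set (P e)) \<and>
     edges Ts = (\<Union>e\<in>edges T. path_edges (P e))"
    using sd unfolding subdivision_def .
  then obtain P :: "'a set \<Rightarrow> 'a list" where
    P: "(\<forall>e\<in>edges T. length (P e) = s + 2 \<and> distinct (P e) \<and> {hd (P e), last (P e)} = e \<and>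
        set (butlast (tl (P e))) \<inter> verts T = {}) \<and>
     (\<forall>e\<in>edges T. \<forall>e'\<in>edges T. e \<noteq> e' \<longrightarrow>
        set (butlast (tl (P e))) \<inter> set (butlast (tl (P e'))) = {}) \<and>
     verts Ts = verts T \<union> (\<Union>e\<in>edges T. set (P e)) \<and>
     edges Ts = (\<Union>e\<in>edges T. path_edges (P e))" ..
  note P1 = P[THEN conjunct1]
  note P2 = P[THEN conjunct2, THEN conjunct1]
  note VTs = P[THEN conjunct2, THEN conjunct2, THEN conjunct1]
  note ETs = P[THEN conjunct2, THEN conjunct2, THEN conjunct2]
  define I where "I = (\<lambda>e. set (butlast (tl (P e))))"
  define ET where "ET = edges T"
  define VT where "VT = verts T"
  have simpT: "simple_graph T" using tree unfolding is_tree_def connected_graph_def by blast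
  have fET: "finite ET" unfolding ET_def by (rule simple_finE[OF simpT])
  have fVT: "finite VT" using simpT unfolding simple_graph_def VT_def by blast
  have subT: "\<And>e. e \<in> ET \<Longrightarrow> e \<subseteq> VT" using simple_edge[OF simpT] unfolding ET_def VT_def by blast
  have len: "\<And>e. e \<in> ET \<Longrightarrow> length (P e) \<ge> 3" using P1 s1 unfolding ET_def by fastforce
  have dist: "\<And>e. e \<in> ET \<Longrightarrow> distinct (P e)" using P1 unfolding ET_def by blast
  have hl: "\<And>e. e \<in> ET \<Longrightarrow> {hd (P e), last (P e)} = e" using P1 unfolding ET_def by blast
  have IV: "\<And>e. e \<in> ET \<Longrightarrow> I e \<inter> VT = {}" using P1 unfolding ET_def VT_def I_def by blast
  have Idisj: "\<And>e e'. e \<in> ET \<Longrightarrow> e' \<in> ET \<Longrightarrow> e \<noteq> e' \<Longrightarrow> I e \<inter> I e' = {}"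
    using P2 unfolding ET_def I_def by blast
  have setP: "\<And>e. e \<in> ET \<Longrightarrow> set (P e) = e \<union> I e"
  proof -
    fix e assume e: "e \<in> ET"
    have "length (P e) \<ge> 2" using len[OF e] by simp
    then show "set (P e) = e \<union> I e" using set_L[of "P e"] hl[OF e] unfolding I_def by simp
  qed
  have cardI: "\<And>e. e \<in> ET \<Longrightarrow> card (I e) = s"
    using card_int dist P1 unfolding I_def ET_def by fastforce
  have uniq: "\<And>x e e'. e \<in> ET \<Longrightarrow> e' \<in> ET \<Longrightarrow> x \<in> I e \<Longrightarrow> x \<in> set (P e') \<Longrightarrow> e' = e"
  proof -
    fix x e e' assume a: "e \<in> ET" "e' \<in> ET" "x \<in> I e" "x \<in> set (P e')"
    have "x \<notin> VT" using IV[OF a(1)] a(3) by blast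
    then have "x \<notin> e'" using subT[OF a(2)] by blast
    then have "x \<in> I e'" using setP[OF a(2)] a(4) by blast
    then show "e' = e" using Idisj[OF a(1,2)] a(3) by blast
  qed
  have ETs': "edges Ts = (\<Union>e\<in>ET. path_edges (P e))" using ETs ET_def by simp
  have VTs': "verts Ts = VT \<union> (\<Union>e\<in>ET. I e)"
  proof -
    have "verts Ts = VT \<union> (\<Union>e\<in>ET. e \<union> I e)" using VTs setP unfolding VT_def ET_def by auto
    also have "\<dots> = VT \<union> (\<Union>e\<in>ET. I e)" using subT by blast
    finally show ?thesis .
  qed
  have degI: "deg Ts x = 2" if e: "e \<in> ET" and x: "x \<in> I e" for e x
  proof -
    have "{f \<in> edges Ts. x \<in> f} = {f \<in> path_edges (P e). x \<in> f}"
    proof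
      show "{f \<in> edges Ts. x \<in> f} \<subseteq> {f \<in> path_edges (P e). x \<in> f}"
      proof
        fix f assume f: "f \<in> {f \<in> edges Ts. x \<in> f}"
        then obtain e' where e': "e' \<in> ET" "f \<in> path_edges (P e')" unfolding ETs' by blast
        have "x \<in> set (P e')" using pe_sub[OF e'(2)] f by blast
        then have "e' = e" using uniq[OF e e'(1) x] by blast
        then show "f \<in> {f \<in> path_edges (P e). x \<in> f}" using e' f by blast
      qed
      show "{f \<in> path_edges (P e). x \<in> f} \<subseteq> {f \<in> edges Ts. x \<in> f}" unfolding ETs' using e by blast
    qed
    moreover obtain j where j: "x = P e ! j" "0 < j" "Suc j < length (P e)"
      using x unfolding I_def int_conv by blast
    ultimately show ?thesis unfolding deg_def using deg_int[OF dist[OF e] j(2,3)] j(1) by simp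
  qed
  have degV: "deg Ts v = deg T v" if v: "v \<in> VT" for v
  proof -
    define A where "A = (\<lambda>e. {f \<in> path_edges (P e). v \<in> f})"
    have eq: "{f \<in> edges Ts. v \<in> f} = (\<Union>e\<in>{e\<in>ET. v \<in> e}. A e)"
    proof
      show "{f \<in> edges Ts. v \<in> f} \<subseteq> (\<Union>e\<in>{e\<in>ET. v \<in> e}. A e)"
      proof
        fix f assume f: "f \<in> {f \<in> edges Ts. v \<in> f}"
        then obtain e where e: "e \<in> ET" "f \<in> path_edges (P e)" unfolding ETs' by blast
        have "v \<in> set (P e)" using pe_sub[OF e(2)] f by blast
        moreover have "v \<notin> I e" using IV[OF e(1)] v by blast
        ultimately have "v \<in> e" using setP[OF e(1)] by blast
        then show "f \<in> (\<Union>e\<in>{e\<in>ET. v \<in> e}. A e)" using e f unfolding A_def by blast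
      qed
      show "(\<Union>e\<in>{e\<in>ET. v \<in> e}. A e) \<subseteq> {f \<in> edges Ts. v \<in> f}"
        unfolding A_def ETs' by blast
    qed
    have fin: "finite {e\<in>ET. v \<in> e}" using fET by simp
    have finA: "\<forall>e\<in>{e\<in>ET. v \<in> e}. finite (A e)" unfolding A_def path_edges_def by simp
    have disj: "\<forall>e\<in>{e\<in>ET. v \<in> e}. \<forall>e'\<in>{e\<in>ET. v \<in> e}. e \<noteq> e' \<longrightarrow> A e \<inter> A e' = {}"
    proof (intro ballI impI)
      fix e e' assume e: "e \<in> {e\<in>ET. v \<in> e}" and e': "e' \<in> {e\<in>ET. v \<in> e}" and ne: "e \<noteq> e'"
      show "A e \<inter> A e' = {}"
      proof (rule ccontr)
        assume "A e \<inter> A e' \<noteq> {}"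
        then obtain f where f: "f \<in> path_edges (P e)" "f \<in> path_edges (P e')" unfolding A_def by blast
        have eET: "e \<in> ET" using e by simp
        obtain x where x: "x \<in> f" "x \<in> I e" using meet_int[OF len[OF eET] f(1)] unfolding I_def by blast
        have "x \<in> set (P e')" using pe_sub[OF f(2)] x(1) by blast
        then have "e' = e" using uniq[OF eET _ x(2)] e' by simp
        then show False using ne by simp
      qed
    qed
    have c1: "card (A e) = 1" if e: "e \<in> {e\<in>ET. v \<in> e}" for e
    proof -
      have eET: "e \<in> ET" using e by simp
      have "v \<in> {hd (P e), last (P e)}" using hl[OF eET] e by simp
      then show ?thesis unfolding A_def by (rule deg_end[OF dist[OF eET] len[OF eET]])
    qed
    have "card {f \<in> edges Ts. v \<in> f} = (\<Sum>e\<in>{e\<in>ET. v \<in> e}. card (A e))"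
      unfolding eq by (rule card_UN_disjoint[OF fin finA disj])
    also have "\<dots> = card {e\<in>ET. v \<in> e}" using c1 by simp
    finally show ?thesis unfolding deg_def ET_def by simp
  qed
  define U where "U = (\<Union>e\<in>ET. I e)"
  have fU: "finite U" unfolding U_def I_def using fET by simp
  have UV: "U \<inter> VT = {}" unfolding U_def using IV by blast
  have VTs2: "verts Ts = VT \<union> U" using VTs' U_def by simp
  have cardU: "card U = card ET * s"
  proof -
    have "card U = (\<Sum>e\<in>ET. card (I e))" unfolding U_def
      by (rule card_UN_disjoint) (use fET Idisj in \<open>auto simp: I_def\<close>)
    also have "\<dots> = card ET * s" using cardI by simp
    finally show ?thesis .
  qed
  have degU: "\<And>x. x \<in> U \<Longrightarrow> deg Ts x = 2" unfolding U_def using degI by blast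
  have simpTs: "simple_graph Ts"
  proof -
    have "finite (verts Ts)" using VTs2 fVT fU by simp
    moreover have "\<forall>f\<in>edges Ts. \<exists>a b. a \<noteq> b \<and> f = {a, b} \<and> a \<in> verts Ts \<and> b \<in> verts Ts"
    proof
      fix f assume "f \<in> edges Ts"
      then obtain e where e: "e \<in> ET" "f \<in> path_edges (P e)" unfolding ETs' by blast
      then obtain i where i: "f = {P e ! i, P e ! Suc i}" "Suc i < length (P e)" unfolding pe_conv by blast
      have "P e ! i \<noteq> P e ! Suc i" using dist[OF e(1)] i(2) by (simp add: nth_eq_iff_index_eq)
      moreover have "set (P e) \<subseteq> verts Ts" using VTs e(1) unfolding ET_def by blast
      moreover have "P e ! i \<in> set (P e)" "P e ! Suc i \<in> set (P e)" using i(2) by auto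
      ultimately show "\<exists>a b. a \<noteq> b \<and> f = {a, b} \<and> a \<in> verts Ts \<and> b \<in> verts Ts" using i(1) by blast
    qed
    ultimately show ?thesis unfolding simple_graph_def by blast
  qed
  have two: "\<forall>f\<in>edges Ts. \<exists>x\<in>f. deg Ts x = 2"
  proof
    fix f assume "f \<in> edges Ts"
    then obtain e where e: "e \<in> ET" "f \<in> path_edges (P e)" unfolding ETs' by blast
    obtain x where x: "x \<in> f" "x \<in> I e" using meet_int[OF len[OF e(1)] e(2)] unfolding I_def by blast
    show "\<exists>x\<in>f. deg Ts x = 2" using degI[OF e(1) x(2)] x(1) by blast
  qed
  have hsT: "\<And>g. (\<Sum>e\<in>ET. \<Sum>x\<in>e. g x) = (\<Sum>v\<in>VT. (g v :: real) * real (deg T v))"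
    unfolding ET_def VT_def by (rule handshake[OF simpT])
  have hsTs: "\<And>g. (\<Sum>e\<in>edges Ts. \<Sum>x\<in>e. g x) = (\<Sum>v\<in>VT \<union> U. (g v :: real) * real (deg Ts v))"
    unfolding VTs2[symmetric] by (rule handshake[OF simpTs])
  have card2T: "\<And>e. e \<in> ET \<Longrightarrow> card e = 2" using simple_edge[OF simpT] unfolding ET_def by fastforce
  have card2Ts: "\<And>e. e \<in> edges Ts \<Longrightarrow> card e = 2" using simple_edge[OF simpTs] by fastforce
  define m where "m = real (card ET)"
  have sumd: "(\<Sum>v\<in>VT. real (deg T v)) = 2 * m"
  proof -
    have "(\<Sum>e\<in>ET. \<Sum>x\<in>e. (1::real)) = 2 * m" using card2T unfolding m_def by simp
    then show ?thesis using hsT[of "\<lambda>_. 1"] by simp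
  qed
  have sumd2: "(\<Sum>v\<in>VT. real (deg T v) * real (deg T v)) = 4 * m"
    using hsT[of "\<lambda>x. real (deg T x)"] sumT unfolding m_def ET_def by simp
  have cardETs: "real (card (edges Ts)) = m + m * real s"
  proof -
    have "(\<Sum>e\<in>edges Ts. \<Sum>x\<in>e. (1::real)) = 2 * real (card (edges Ts))" using card2Ts by simp
    also have "(\<Sum>e\<in>edges Ts. \<Sum>x\<in>e. (1::real)) = (\<Sum>v\<in>VT \<union> U. real (deg Ts v))" using hsTs[of "\<lambda>_. 1"] by simp
    also have "\<dots> = (\<Sum>v\<in>VT. real (deg Ts v)) + (\<Sum>v\<in>U. real (deg Ts v))"
      using fVT fU UV by (simp add: sum.union_disjoint Int_commute)
    also have "(\<Sum>v\<in>VT. real (deg Ts v)) = (\<Sum>v\<in>VT. real (deg T v))" using degV by simp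
    also have "(\<Sum>v\<in>U. real (deg Ts v)) = (\<Sum>v\<in>U. 2)" using degU by simp
    finally have "2 * real (card (edges Ts)) = 2 * m + 2 * real (card U)" using sumd by simp
    then show ?thesis using cardU unfolding m_def by simp
  qed
  have sumTs: "(\<Sum>e\<in>edges Ts. \<Sum>x\<in>e. real (deg Ts x)) = 4 * real (card (edges Ts))"
  proof -
    have "(\<Sum>e\<in>edges Ts. \<Sum>x\<in>e. real (deg Ts x)) = (\<Sum>v\<in>VT \<union> U. real (deg Ts v) * real (deg Ts v))"
      by (rule hsTs)
    also have "\<dots> = (\<Sum>v\<in>VT. real (deg Ts v) * real (deg Ts v)) + (\<Sum>v\<in>U. real (deg Ts v) * real (deg Ts v))"
      using fVT fU UV by (simp add: sum.union_disjoint Int_commute)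
    also have "(\<Sum>v\<in>VT. real (deg Ts v) * real (deg Ts v)) = (\<Sum>v\<in>VT. real (deg T v) * real (deg T v))" using degV by simp
    also have "(\<Sum>v\<in>U. real (deg Ts v) * real (deg Ts v)) = (\<Sum>v\<in>U. 4)" using degU by simp
    finally show ?thesis using sumd2 cardETs cardU unfolding m_def by (simp add: algebra_simps)
  qed
  have ex: "\<exists>f\<in>edges Ts. \<exists>x\<in>f. deg Ts x \<noteq> 2"
  proof -
    have nT: "real (card VT) = m + 1" using tree unfolding is_tree_def m_def ET_def VT_def by simp
    have "(\<Sum>v\<in>VT. (real (deg T v) - 1) * (real (deg T v) - 2)) =
        (\<Sum>v\<in>VT. real (deg T v) * real (deg T v)) - 3 * (\<Sum>v\<in>VT. real (deg T v)) + 2 * real (card VT)"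
      by (simp add: algebra_simps sum.distrib sum_subtractf sum_distrib_left)
    also have "\<dots> = 2" using sumd sumd2 nT by simp
    finally have "(\<Sum>v\<in>VT. (real (deg T v) - 1) * (real (deg T v) - 2)) \<noteq> 0" by simp
    then obtain v where v: "v \<in> VT" "(real (deg T v) - 1) * (real (deg T v) - 2) \<noteq> 0"
      by (meson sum.neutral)
    have d12: "deg T v \<noteq> 1" "deg T v \<noteq> 2" using v(2) by auto
    have "deg T v \<noteq> 0"
    proof
      assume d0: "deg T v = 0"
      have "ET \<noteq> {}" using ne ETs' by auto
      then obtain e0 where e0: "e0 \<in> ET" by blast
      obtain a b where ab: "a \<noteq> b" "e0 = {a,b}" "a \<in> VT" using simple_edge[OF simpT] e0 unfolding ET_def VT_def by blast
      have "(adj T)\<^sup>*\<^sup>* v a" using tree v(1) ab(3) unfolding is_tree_def connected_graph_def VT_def by blast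
      then have "\<exists>e\<in>ET. v \<in> e"
      proof (cases rule: converse_rtranclpE)
        case base then show ?thesis using e0 ab by blast
      next
        case (step y) then show ?thesis unfolding adj_def ET_def by blast
      qed
      then have "{e \<in> edges T. v \<in> e} \<noteq> {}" unfolding ET_def by blast
      then have "deg T v > 0" unfolding deg_def using fET ET_def by (simp add: card_gt_0_iff)
      then show False using d0 by simp
    qed
    then have "{e \<in> ET. v \<in> e} \<noteq> {}" unfolding deg_def ET_def by (metis card.empty less_numeral_extra(3) neq0_conv)
    then obtain e where e: "e \<in> ET" "v \<in> e" by blast
    have "v \<in> {hd (P e), last (P e)}" using hl[OF e(1)] e(2) by simp
    then have "card {f\<in>path_edges (P e). v \<in> f} = 1" by (rule deg_end[OF dist[OF e(1)] len[OF e(1)]])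
    then obtain f where f: "f \<in> path_edges (P e)" "v \<in> f" by (metis (no_types, lifting) card_1_singletonE mem_Collect_eq singletonI)
    have "f \<in> edges Ts" unfolding ETs' using e(1) f(1) by blast
    moreover have "deg Ts v \<noteq> 2" using degV[OF v(1)] d12 by simp
    ultimately show ?thesis using f(2) by blast
  qed
  show ?thesis unfolding goodG_def using simpTs two sumTs ex by blast
qed


theorem corollary1:
  fixes T Ts H :: "'a graph" and s :: nat
  assumes "is_tree T"
    and "(\<Sum>e\<in>edges T. \<Sum>x\<in>e. real (deg T x)) = 4 * real (card (edges T))"
    and "s \<ge> 1"
    and "subdivision s T Ts"
    and "single_edge_division Ts H"
  shows "neutral H \<and> (\<forall>H'. single_edge_division H H' \<longrightarrow> neutral H')"
proof -
  have ne: "edges Ts \<noteq> {}" using assms(5) unfolding single_edge_division_def by blast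
  have gTs: "goodG Ts" by (rule sub_good[OF assms(1-4) ne])
  have gH: "goodG H" by (rule good_sed[OF gTs assms(5)])
  show ?thesis using good_neutral gH good_sed by blast
qed

end
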